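(* Let $\mathbb{F}$ be a field, let $A$ be a matrix over $\mathbb{F}$ with $n$ columns, and let $B$ be a matrix over $\mathbb{F}$ with $n$ columns whose row space is the orthogonal complement $W^\perp=\{x\in\mathbb{F}^n: x\cdot w=0\ \forall w\in W\}$ of the row space $W$ of $A$ (so that $M(B)$ represents the dual matroid $M(A)^*$). Then $\mathrm{csd}(M(A))=\mathrm{dsd}(M(B))$.
   Context: Here $x\cdot w=\sum_i x_iw_i$. $M(A)$ is the column matroid of $A$ (ground set: the columns, indexed by $\{1,\dots,n\}$; independent sets: linearly independent sets of columns). A matroid is connected if any two elements lie in a common circuit; components are maximal connected restrictions. Contraction$^*$-depth: for a matrix $A$ with $m$ rows and a subspace $K\subseteq\mathbb{F}^m$, let $M(A,K)$ be the matroid on the columns where a set $\{u_1,\dots,u_\ell\}$ is dependent iff some $\sum\alpha_iu_i\in K$ with not all $\alpha_i=0$. Set $\mathrm{csd}(A,K)=0$ if $M(A,K)$ has rank $0$; otherwise if $M(A,K)$ is disconnected, $\mathrm{csd}(A,K)=\max_C \mathrm{csd}(A_C,K)$ over components $C$ ($A_C$ the submatrix of columns in $C$); otherwise $\mathrm{csd}(A,K)=1+\min_{v\in\mathbb{F}^m}\mathrm{csd}(A,K+\mathrm{span}(v))$; and $\mathrm{csd}(M(A))=\mathrm{csd}(A,\{0\})$. Deletion$^*$-depth: for a matrix $B$ with $n$ columns, $\mathrm{dsd}(M(B))=0$ if the rank of $M(B)$ equals its number of elements; otherwise if $M(B)$ is disconnected, $\mathrm{dsd}(M(B))$ is the maximum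 of $\mathrm{dsd}(M(B_C))$ over the components $C$; otherwise $\mathrm{dsd}(M(B))=1+\min_{v\in\mathbb{F}^n}\mathrm{dsd}(M(B\oplus v^\top))$, where $B\oplus v^\top$ is $B$ with the row $v^\top$ appended. *)

theory Defs
  imports "Jordan_Normal_Form.Matrix"
begin

text \<open>Matrices are Jordan_Normal_Form matrices over a field; columns of A are indexed by
  0..<dim_col A. A column submatrix A_C is represented by the pair (A, C) with C a set of
  column indices.\<close>

definition lincomb_cols :: "'a::field mat \<Rightarrow> (nat \<Rightarrow> 'a) \<Rightarrow> nat set \<Rightarrow> 'a vec" where
  "lincomb_cols A \<alpha> S = vec (dim_row A) (\<lambda>r. \<Sum>i\<in>S. \<alpha> i * A $$ (r, i))"

definition mdep :: "'a::field mat \<Rightarrow> 'a vec set \<Rightarrow> nat set \<Rightarrow> bool" where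
  "mdep A K S \<longleftrightarrow> (\<exists>\<alpha>. (\<exists>i\<in>S. \<alpha> i \<noteq> 0) \<and> lincomb_cols A \<alpha> S \<in> K)"

definition mindep :: "'a::field mat \<Rightarrow> 'a vec set \<Rightarrow> nat set \<Rightarrow> bool" where
  "mindep A K S \<longleftrightarrow> \<not> mdep A K S"

definition mrank :: "'a::field mat \<Rightarrow> 'a vec set \<Rightarrow> nat set \<Rightarrow> nat" where
  "mrank A K E = Max {card S | S. S \<subseteq> E \<and> mindep A K S}"

definition mcircuit :: "'a::field mat \<Rightarrow> 'a vec set \<Rightarrow> nat set \<Rightarrow> bool" where
  "mcircuit A K S \<longleftrightarrow> mdep A K S \<and> (\<forall>T. T \<subset> S \<longrightarrow> mindep A K T)"

definition mconnected :: "'a::field mat \<Rightarrow> 'a vec set \<Rightarrow> nat set \<Rightarrow> bool" where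
  "mconnected A K E \<longleftrightarrow>
     (\<forall>e\<in>E. \<forall>f\<in>E. e \<noteq> f \<longrightarrow> (\<exists>S. mcircuit A K S \<and> S \<subseteq> E \<and> e \<in> S \<and> f \<in> S))"

definition mcomponent :: "'a::field mat \<Rightarrow> 'a vec set \<Rightarrow> nat set \<Rightarrow> nat set \<Rightarrow> bool" where
  "mcomponent A K E C \<longleftrightarrow> C \<noteq> {} \<and> C \<subseteq> E \<and> mconnected A K C \<and>
     (\<forall>C'. C \<subset> C' \<and> C' \<subseteq> E \<longrightarrow> \<not> mconnected A K C')"

definition add_span :: "'a::field vec set \<Rightarrow> 'a vec \<Rightarrow> 'a vec set" where
  "add_span K v = {k + c \<cdot>\<^sub>v v | k c. k \<in> K}"

text \<open>csd_le A K E d  means  csd(A_E, K) \<le> d  (least fixed point reading of the recursion).\<close>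
inductive csd_le :: "'a::field mat \<Rightarrow> 'a vec set \<Rightarrow> nat set \<Rightarrow> nat \<Rightarrow> bool" for A where
  rank0: "mrank A K E = 0 \<Longrightarrow> csd_le A K E d"
| disc: "mrank A K E \<noteq> 0 \<Longrightarrow> \<not> mconnected A K E \<Longrightarrow>
          (\<forall>C. mcomponent A K E C \<longrightarrow> csd_le A K C d) \<Longrightarrow> csd_le A K E d"
| conn: "mrank A K E \<noteq> 0 \<Longrightarrow> mconnected A K E \<Longrightarrow> v \<in> carrier_vec (dim_row A) \<Longrightarrow>
          csd_le A (add_span K v) E d \<Longrightarrow> csd_le A K E (Suc d)"

definition csd :: "'a::field mat \<Rightarrow> nat" where
  "csd A = (LEAST d. csd_le A {0\<^sub>v (dim_row A)} {0..<dim_col A} d)"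

text \<open>dsd_le B E d  means  dsd(M(B_E)) \<le> d. M(B) is M(B,{0}).
  Appending a row v to B_E is represented by appending a row v \<in> F^n to B (entries of v
  outside E are irrelevant).\<close>
inductive dsd_le :: "'a::field mat \<Rightarrow> nat set \<Rightarrow> nat \<Rightarrow> bool" where
  indep: "mrank B {0\<^sub>v (dim_row B)} E = card E \<Longrightarrow> dsd_le B E d"
| disc: "mrank B {0\<^sub>v (dim_row B)} E \<noteq> card E \<Longrightarrow> \<not> mconnected B {0\<^sub>v (dim_row B)} E \<Longrightarrow>
          (\<forall>C. mcomponent B {0\<^sub>v (dim_row B)} E C \<longrightarrow> dsd_le B C d) \<Longrightarrow> dsd_le B E d"
| conn: "mrank B {0\<^sub>v (dim_row B)} E \<noteq> card E \<Longrightarrow> mconnected B {0\<^sub>v (dim_row B)} E \<Longrightarrow>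
          v \<in> carrier_vec (dim_col B) \<Longrightarrow>
          dsd_le (B @\<^sub>r mat_of_rows (dim_col B) [v]) E d \<Longrightarrow> dsd_le B E (Suc d)"

definition dsd :: "'a::field mat \<Rightarrow> nat" where
  "dsd B = (LEAST d. dsd_le B {0..<dim_col B} d)"

definition row_space :: "'a::field mat \<Rightarrow> 'a vec set" where
  "row_space A = {vec (dim_col A) (\<lambda>j. \<Sum>i<dim_row A. c i * A $$ (i, j)) | c. True}"

definition orth_compl :: "nat \<Rightarrow> 'a::field vec set \<Rightarrow> 'a vec set" where
  "orth_compl n W = {x \<in> carrier_vec n. \<forall>w\<in>W. x \<bullet> w = 0}"

end

theory Submission
  imports Defs
begin


definition supp_in :: "(nat \<Rightarrow> 'a::zero) \<Rightarrow> nat set \<Rightarrow> bool" where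
  "supp_in x S \<longleftrightarrow> (\<forall>i. i \<notin> S \<longrightarrow> x i = 0)"

definition lsub :: "nat set \<Rightarrow> (nat \<Rightarrow> 'a::field) set \<Rightarrow> bool" where
  "lsub E X \<longleftrightarrow> (\<lambda>_. 0) \<in> X \<and> (\<forall>x\<in>X. supp_in x E) \<and>
     (\<forall>x\<in>X. \<forall>y\<in>X. (\<lambda>i. x i + y i) \<in> X) \<and> (\<forall>c. \<forall>x\<in>X. (\<lambda>i. c * x i) \<in> X)"

definition dotE :: "nat set \<Rightarrow> (nat \<Rightarrow> 'a::field) \<Rightarrow> (nat \<Rightarrow> 'a) \<Rightarrow> 'a" where
  "dotE E x y = (\<Sum>i\<in>E. x i * y i)"

definition perp :: "nat set \<Rightarrow> (nat \<Rightarrow> 'a::field) set \<Rightarrow> (nat \<Rightarrow> 'a) set" where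
  "perp E X = {y. supp_in y E \<and> (\<forall>x\<in>X. dotE E x y = 0)}"

definition sdep :: "(nat \<Rightarrow> 'a::zero) set \<Rightarrow> nat set \<Rightarrow> bool" where
  "sdep X S \<longleftrightarrow> (\<exists>x\<in>X. supp_in x S \<and> (\<exists>i\<in>S. x i \<noteq> 0))"

definition acirc :: "(nat \<Rightarrow> 'a::zero) set \<Rightarrow> nat set \<Rightarrow> bool" where
  "acirc X S \<longleftrightarrow> sdep X S \<and> (\<forall>T. T \<subset> S \<longrightarrow> \<not> sdep X T)"

definition rel :: "(nat \<Rightarrow> 'a::zero) set \<Rightarrow> nat \<Rightarrow> nat \<Rightarrow> bool" where
  "rel X e f \<longleftrightarrow> e = f \<or> (\<exists>S. acirc X S \<and> e \<in> S \<and> f \<in> S)"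

definition restr :: "(nat \<Rightarrow> 'a::zero) \<Rightarrow> nat set \<Rightarrow> nat \<Rightarrow> 'a" where
  "restr x S = (\<lambda>i. if i \<in> S then x i else 0)"

definition sep :: "(nat \<Rightarrow> 'a::zero) set \<Rightarrow> nat set \<Rightarrow> bool" where
  "sep X S \<longleftrightarrow> (\<forall>x\<in>X. restr x S \<in> X)"

lemma lsub_lin:
  assumes "lsub E X" "x \<in> X" "y \<in> X"
  shows "(\<lambda>i. x i + c * y i) \<in> X"
proof -
  have cy: "(\<lambda>i. c * y i) \<in> X" using assms unfolding lsub_def by blast
  have "\<forall>x\<in>X. \<forall>y\<in>X. (\<lambda>i. x i + y i) \<in> X" using assms unfolding lsub_def by blast
  from bspec[OF bspec[OF this assms(2)] cy] show ?thesis by simp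
qed

lemma lsub_diff:
  assumes "lsub E X" "x \<in> X" "y \<in> X"
  shows "(\<lambda>i. x i - c * y i) \<in> X"
  using lsub_lin[OF assms, of "-c"] by simp

lemma lsub_smult: "lsub E X \<Longrightarrow> x \<in> X \<Longrightarrow> (\<lambda>i. c * x i) \<in> X"
  unfolding lsub_def by blast

lemma lsub_zero: "lsub E X \<Longrightarrow> (\<lambda>_. 0) \<in> X"
  unfolding lsub_def by blast

lemma lsub_supp: "lsub E X \<Longrightarrow> x \<in> X \<Longrightarrow> supp_in x E"
  unfolding lsub_def by blast

lemma supp_in_nz: "supp_in x S \<Longrightarrow> x i \<noteq> 0 \<Longrightarrow> i \<in> S"
  unfolding supp_in_def by blast

lemma sdep_mono: "sdep X T \<Longrightarrow> T \<subseteq> S \<Longrightarrow> sdep X S"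
  unfolding sdep_def supp_in_def by blast

lemma acirc_sub:
  assumes "lsub E X" "acirc X S" shows "S \<subseteq> E"
proof
  fix i assume i: "i \<in> S"
  obtain x j where x: "x \<in> X" "supp_in x S" "j \<in> S" "x j \<noteq> 0"
    using assms(2) unfolding acirc_def sdep_def by blast
  have "x i \<noteq> 0"
  proof
    assume "x i = 0"
    then have "sdep X (S - {i})" using x unfolding sdep_def supp_in_def
      by (metis DiffI singletonD)
    moreover have "S - {i} \<subset> S" using i by blast
    ultimately show False using assms(2) unfolding acirc_def by blast
  qed
  then show "i \<in> E" using lsub_supp[OF assms(1) x(1)] supp_in_nz by blast
qed

lemma acirc_vec:
  assumes "acirc X S" shows "\<exists>x\<in>X. \<forall>i. x i \<noteq> 0 \<longleftrightarrow> i \<in> S"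
proof -
  obtain x j where x: "x \<in> X" "supp_in x S" "j \<in> S" "x j \<noteq> 0"
    using assms unfolding acirc_def sdep_def by blast
  have "x i \<noteq> 0" if i: "i \<in> S" for i
  proof
    assume "x i = 0"
    then have "sdep X (S - {i})" using x unfolding sdep_def supp_in_def
      by (metis DiffI singletonD)
    moreover have "S - {i} \<subset> S" using i by blast
    ultimately show False using assms unfolding acirc_def by blast
  qed
  then show ?thesis using x unfolding supp_in_def by metis
qed

lemma acirc_no_proper: "acirc X S \<Longrightarrow> acirc X T \<Longrightarrow> T \<subset> S \<Longrightarrow> False"
  unfolding acirc_def by blast

lemma L1:
  assumes E: "lsub E X" "finite E"
  shows "x \<in> X \<Longrightarrow> x h \<noteq> 0 \<Longrightarrow> \<exists>S. acirc X S \<and> h \<in> S \<and> S \<subseteq> {i. x i \<noteq> 0}"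
proof (induction "card {i. x i \<noteq> 0}" arbitrary: x h rule: less_induct)
  case less
  let ?S = "{i. x i \<noteq> 0}"
  have finS: "finite ?S"
    using lsub_supp[OF E(1) less.prems(1)] E(2) unfolding supp_in_def
    by (metis (mono_tags, lifting) mem_Collect_eq rev_finite_subset subsetI)
  have dep: "sdep X ?S" using less.prems unfolding sdep_def supp_in_def by blast
  show ?case
  proof (cases "acirc X ?S")
    case True then show ?thesis using less.prems by blast
  next
    case False
    then obtain T where T: "T \<subset> ?S" "sdep X T" using dep unfolding acirc_def by blast
    then obtain y j where y: "y \<in> X" "supp_in y T" "j \<in> T" "y j \<noteq> 0"
      unfolding sdep_def by blast
    have ysub: "{i. y i \<noteq> 0} \<subseteq> T" using y(2) unfolding supp_in_def by blast
    show ?thesis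
    proof (cases "y h \<noteq> 0")
      case True
      have "{i. y i \<noteq> 0} \<subset> ?S" using ysub T(1) by blast
      then have "card {i. y i \<noteq> 0} < card ?S" by (rule psubset_card_mono[OF finS])
      from less.hyps[OF this y(1) True] show ?thesis using ysub T(1) by blast
    next
      case False
      define x' where "x' = (\<lambda>i. x i - (x j / y j) * y i)"
      have x'X: "x' \<in> X" unfolding x'_def by (rule lsub_diff[OF E(1) less.prems(1) y(1)])
      have x'h: "x' h \<noteq> 0" using False less.prems(2) unfolding x'_def by simp
      have sub: "{i. x' i \<noteq> 0} \<subseteq> ?S - {j}"
      proof
        fix i assume "i \<in> {i. x' i \<noteq> 0}"
        then have "x' i \<noteq> 0" by simp
        moreover have "x' j = 0" unfolding x'_def using y(4) by simp
        moreover have "x i \<noteq> 0 \<or> y i \<noteq> 0" using \<open>x' i \<noteq> 0\<close> unfolding x'_def by auto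
        ultimately show "i \<in> ?S - {j}" using ysub T(1) by auto
      qed
      have "j \<in> ?S" using T(1) y(3) by blast
      then have "{i. x' i \<noteq> 0} \<subset> ?S" using sub by blast
      then have "card {i. x' i \<noteq> 0} < card ?S" by (rule psubset_card_mono[OF finS])
      from less.hyps[OF this x'X x'h] show ?thesis using sub by blast
    qed
  qed
qed



lemma SE:
  assumes E: "lsub E X" "finite E"
    and c: "acirc X S1" "acirc X S2" "g \<in> S1" "g \<in> S2" "h \<in> S2" "h \<notin> S1"
  shows "\<exists>S3. acirc X S3 \<and> h \<in> S3 \<and> S3 \<subseteq> (S1 \<union> S2) - {g}"
proof -
  obtain x1 where x1: "x1 \<in> X" "\<forall>i. x1 i \<noteq> 0 \<longleftrightarrow> i \<in> S1" using acirc_vec[OF c(1)] by blast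
  obtain x2 where x2: "x2 \<in> X" "\<forall>i. x2 i \<noteq> 0 \<longleftrightarrow> i \<in> S2" using acirc_vec[OF c(2)] by blast
  define z where "z = (\<lambda>i. x2 i - (x2 g / x1 g) * x1 i)"
  have zX: "z \<in> X" unfolding z_def by (rule lsub_diff[OF E(1) x2(1) x1(1)])
  have "x1 h = 0" using x1 c(6) by blast
  then have zh: "z h \<noteq> 0" using x2 c(5) unfolding z_def by simp
  have zg: "z g = 0" using x1 c(3) unfolding z_def by auto
  have zsub: "{i. z i \<noteq> 0} \<subseteq> (S1 \<union> S2) - {g}"
  proof
    fix i assume "i \<in> {i. z i \<noteq> 0}"
    then have zi: "z i \<noteq> 0" by simp
    then have "i \<noteq> g" using zg by auto
    moreover have "x1 i \<noteq> 0 \<or> x2 i \<noteq> 0"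
    proof (rule ccontr)
      assume "\<not> (x1 i \<noteq> 0 \<or> x2 i \<noteq> 0)"
      then have "z i = 0" unfolding z_def by simp
      then show False using zi by simp
    qed
    ultimately show "i \<in> (S1 \<union> S2) - {g}" using x1(2) x2(2) by blast
  qed
  from L1[OF E zX zh] zsub show ?thesis by blast
qed

lemma acirc_fin: "lsub E X \<Longrightarrow> finite E \<Longrightarrow> acirc X S \<Longrightarrow> finite S"
  by (rule finite_subset[OF acirc_sub]) assumption+

lemma acirc_in_minus:
  assumes "acirc X S2" "acirc X C" "C \<subseteq> S2 - {g}" "g \<in> S2" shows False
proof -
  have "C \<subset> S2" using assms(3,4) by blast
  then show False using acirc_no_proper[OF assms(1,2)] by blast
qed

lemma trans_core:
  assumes E: "lsub E X" "finite E"
  shows "acirc X S1 \<Longrightarrow> acirc X S2 \<Longrightarrow> e \<in> S1 \<Longrightarrow> h \<in> S2 \<Longrightarrow> S1 \<inter> S2 \<noteq> {} \<Longrightarrow>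
    \<exists>S. acirc X S \<and> e \<in> S \<and> h \<in> S"
proof (induction "card (S1 \<union> S2)" arbitrary: S1 S2 e h rule: less_induct)
  case less
  show ?case
  proof (cases "h \<in> S1 \<or> e \<in> S2")
    case True then show ?thesis using less.prems by blast
  next
    case False
    then have hS1: "h \<notin> S1" and eS2: "e \<notin> S2" by auto
    obtain g where g: "g \<in> S1" "g \<in> S2" using less.prems(5) by blast
    have fin: "finite (S1 \<union> S2)" using acirc_fin[OF E] less.prems(1,2) by blast
    obtain C3 where C3: "acirc X C3" "h \<in> C3" "C3 \<subseteq> (S1 \<union> S2) - {g}"
      using SE[OF E less.prems(1,2) g less.prems(4) hS1] by blast
    obtain C4 where C4: "acirc X C4" "e \<in> C4" "C4 \<subseteq> (S1 \<union> S2) - {g}"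
      using SE[OF E less.prems(2,1) g(2,1) less.prems(3) eS2] by blast
    have m3: "C3 \<inter> (S1 - S2) \<noteq> {}"
    proof
      assume "C3 \<inter> (S1 - S2) = {}"
      then have "C3 \<subseteq> S2 - {g}" using C3(3) by blast
      then show False using acirc_in_minus[OF less.prems(2) C3(1) _ g(2)] by blast
    qed
    have m4: "C4 \<inter> (S2 - S1) \<noteq> {}"
    proof
      assume "C4 \<inter> (S2 - S1) = {}"
      then have "C4 \<subseteq> S1 - {g}" using C4(3) by blast
      then show False using acirc_in_minus[OF less.prems(1) C4(1) _ g(1)] by blast
    qed
    show ?thesis
    proof (cases "S1 \<union> C3 = S1 \<union> S2")
      case False
      moreover have "S1 \<union> C3 \<subseteq> S1 \<union> S2" using C3(3) by blast
      ultimately have "S1 \<union> C3 \<subset> S1 \<union> S2" by (simp add: psubset_eq)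
      then have "card (S1 \<union> C3) < card (S1 \<union> S2)" by (rule psubset_card_mono[OF fin])
      from less.hyps[OF this less.prems(1) C3(1) less.prems(3) C3(2)] m3 show ?thesis by blast
    next
      case T1: True
      show ?thesis
      proof (cases "C4 \<union> S2 = S1 \<union> S2")
        case False
        moreover have "C4 \<union> S2 \<subseteq> S1 \<union> S2" using C4(3) by blast
        ultimately have "C4 \<union> S2 \<subset> S1 \<union> S2" by (simp add: psubset_eq)
        then have "card (C4 \<union> S2) < card (S1 \<union> S2)" by (rule psubset_card_mono[OF fin])
        from less.hyps[OF this C4(1) less.prems(2) C4(2) less.prems(4)] m4 show ?thesis by blast
      next
        case True
        have "S1 - S2 \<subseteq> C4" using True by blast
        then have ne: "C4 \<inter> C3 \<noteq> {}" using m3 by blast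
        have sb: "C4 \<union> C3 \<subseteq> S1 \<union> S2" using C3(3) C4(3) by blast
        have "g \<notin> C4 \<union> C3" using C3(3) C4(3) by blast
        then have "C4 \<union> C3 \<noteq> S1 \<union> S2" using g by blast
        then have "C4 \<union> C3 \<subset> S1 \<union> S2" using sb by (simp add: psubset_eq)
        then have "card (C4 \<union> C3) < card (S1 \<union> S2)" by (rule psubset_card_mono[OF fin])
        from less.hyps[OF this C4(1) C3(1) C4(2) C3(2) ne] show ?thesis .
      qed
    qed
  qed
qed

lemma rel_trans:
  assumes E: "lsub E X" "finite E" and r: "rel X e g" "rel X g h"
  shows "rel X e h"
proof (cases "e = g \<or> g = h")
  case True then show ?thesis using r by (elim disjE) simp_all
next
  case False
  then obtain S1 S2 where "acirc X S1" "e \<in> S1" "g \<in> S1" "acirc X S2" "g \<in> S2" "h \<in> S2"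
    using r unfolding rel_def by blast
  moreover then have "S1 \<inter> S2 \<noteq> {}" by blast
  ultimately obtain S where "acirc X S" "e \<in> S" "h \<in> S" using trans_core[OF E, of S1 S2 e h] by blast
  then show ?thesis unfolding rel_def by blast
qed

lemma rel_sym: "rel X e f \<Longrightarrow> rel X f e"
  unfolding rel_def by blast

lemma rel_refl: "rel X e e"
  unfolding rel_def by blast

lemma restr_supp: "supp_in (restr x S) S"
  unfolding restr_def supp_in_def by auto

lemma sep_class:
  assumes E: "lsub E X" "finite E"
  shows "sep X {g \<in> E. rel X e g}"
  unfolding sep_def
proof
  let ?T = "{g \<in> E. rel X e g}"
  fix x assume "x \<in> X"
  then show "restr x ?T \<in> X"
  proof (induction "card {i \<in> ?T. x i \<noteq> 0}" arbitrary: x rule: less_induct)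
    case less
    show ?case
    proof (cases "\<exists>h\<in>?T. x h \<noteq> 0")
      case False
      then have "restr x ?T = (\<lambda>_. 0)" unfolding restr_def by auto
      then show ?thesis using lsub_zero[OF E(1)] by simp
    next
      case True
      then obtain h where h: "h \<in> ?T" "x h \<noteq> 0" by blast
      obtain C where C: "acirc X C" "h \<in> C" "C \<subseteq> {i. x i \<noteq> 0}"
        using L1[OF E less.prems h(2)] by blast
      have CT: "C \<subseteq> ?T"
      proof
        fix g assume "g \<in> C"
        then have "rel X h g" using C unfolding rel_def by blast
        then have "rel X e g" using rel_trans[OF E] h(1) by blast
        moreover have "g \<in> E" using acirc_sub[OF E(1) C(1)] \<open>g \<in> C\<close> by blast
        ultimately show "g \<in> ?T" by blast
      qed
      obtain w where w: "w \<in> X" "\<forall>i. w i \<noteq> 0 \<longleftrightarrow> i \<in> C" using acirc_vec[OF C(1)] by blast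
      define x' where "x' = (\<lambda>i. x i - (x h / w h) * w i)"
      have x'X: "x' \<in> X" unfolding x'_def by (rule lsub_diff[OF E(1) less.prems w(1)])
      have sub: "{i \<in> ?T. x' i \<noteq> 0} \<subset> {i \<in> ?T. x i \<noteq> 0}"
      proof -
        have "x' h = 0" using w C(2) unfolding x'_def by auto
        moreover have "\<And>i. x' i \<noteq> 0 \<Longrightarrow> x i \<noteq> 0"
          using w C(3) unfolding x'_def by fastforce
        ultimately show ?thesis using h by blast
      qed
      have finT: "finite {i \<in> ?T. x i \<noteq> 0}" using E(2) by auto
      have "card {i \<in> ?T. x' i \<noteq> 0} < card {i \<in> ?T. x i \<noteq> 0}"
        by (rule psubset_card_mono[OF finT sub])
      from less.hyps[OF this x'X] have r': "restr x' ?T \<in> X" .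
      have eq: "restr x ?T = (\<lambda>i. restr x' ?T i + (x h / w h) * w i)"
      proof
        fix i show "restr x ?T i = restr x' ?T i + (x h / w h) * w i"
          using w CT unfolding restr_def x'_def by auto
      qed
      show ?thesis unfolding eq by (rule lsub_lin[OF E(1) r' w(1)])
    qed
  qed
qed

definition nosep :: "(nat \<Rightarrow> 'a::zero) set \<Rightarrow> nat \<Rightarrow> nat \<Rightarrow> bool" where
  "nosep X e f \<longleftrightarrow> (\<forall>S. sep X S \<longrightarrow> e \<in> S \<longrightarrow> f \<in> S)"

lemma rel_iff_nosep:
  assumes E: "lsub E X" "finite E" and ef: "e \<in> E" "f \<in> E"
  shows "rel X e f \<longleftrightarrow> nosep X e f"
proof
  assume r: "rel X e f"
  show "nosep X e f" unfolding nosep_def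
  proof (intro allI impI)
    fix S assume S: "sep X S" "e \<in> S"
    show "f \<in> S"
    proof (cases "e = f")
      case True then show ?thesis using S by simp
    next
      case False
      then obtain C where C: "acirc X C" "e \<in> C" "f \<in> C" using r unfolding rel_def by blast
      obtain w where w: "w \<in> X" "\<forall>i. w i \<noteq> 0 \<longleftrightarrow> i \<in> C" using acirc_vec[OF C(1)] by blast
      have "restr w S \<in> X" using S w unfolding sep_def by blast
      moreover have "supp_in (restr w S) (C \<inter> S)" using w unfolding restr_def supp_in_def by auto
      moreover have "restr w S e \<noteq> 0" using w C S unfolding restr_def by auto
      ultimately have "sdep X (C \<inter> S)" using C S unfolding sdep_def by blast
      moreover
      { assume "f \<notin> S" then have "C \<inter> S \<subset> C" using C by blast }
      ultimately show ?thesis using C(1) unfolding acirc_def by blast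
    qed
  qed
next
  assume "nosep X e f"
  moreover have "sep X {g \<in> E. rel X e g}" by (rule sep_class[OF E])
  moreover have "e \<in> {g \<in> E. rel X e g}" using ef rel_refl by fastforce
  ultimately show "rel X e f" unfolding nosep_def by blast
qed



lemma dotE_comm: "dotE E x y = dotE E y x"
  unfolding dotE_def by (simp add: mult.commute)

lemma lsub_perp: "lsub E (perp E X)"
proof -
  have a: "(\<Sum>i\<in>E. x i * (y i + z i)) = (\<Sum>i\<in>E. x i * y i) + (\<Sum>i\<in>E. x i * z i)"
    for x y z :: "nat \<Rightarrow> 'a" by (simp add: distrib_left sum.distrib)
  have b: "(\<Sum>i\<in>E. x i * (c * y i)) = c * (\<Sum>i\<in>E. x i * y i)"
    for x y :: "nat \<Rightarrow> 'a" and c by (simp add: sum_distrib_left algebra_simps)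
  show ?thesis
    unfolding lsub_def perp_def dotE_def supp_in_def using a b by auto
qed

lemma sep_perp:
  assumes "sep X S" shows "sep (perp E X) S"
  unfolding sep_def
proof
  fix y assume y: "y \<in> perp E X"
  have "supp_in (restr y S) E" using y unfolding perp_def supp_in_def restr_def by auto
  moreover have "dotE E x (restr y S) = 0" if x: "x \<in> X" for x
  proof -
    have "dotE E x (restr y S) = dotE E (restr x S) y"
      unfolding dotE_def restr_def by (rule sum.cong) auto
    moreover have "restr x S \<in> X" using assms x unfolding sep_def by blast
    ultimately show ?thesis using y unfolding perp_def by auto
  qed
  ultimately show "restr y (S) \<in> perp E X" unfolding perp_def by blast
qed

lemma key:
  assumes "finite E"
  shows "lsub E X \<Longrightarrow> supp_in v E \<Longrightarrow> v \<notin> X \<Longrightarrow>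
    \<exists>y. supp_in y E \<and> (\<forall>x\<in>X. dotE E x y = 0) \<and> dotE E v y \<noteq> 0"
  using assms
proof (induction E arbitrary: X v rule: finite_induct)
  case empty
  then have "v = (\<lambda>_. 0)" unfolding supp_in_def by auto
  then show ?case using empty lsub_zero by blast
next
  case (insert a E0)
  note IH = insert.IH
  have dins: "dotE (insert a E0) x y = x a * y a + dotE E0 x y" for x y :: "nat \<Rightarrow> 'a"
    unfolding dotE_def using insert.hyps by simp
  show ?case
  proof (cases "\<forall>w\<in>X. w a = 0")
    case True
    have "\<forall>x\<in>X. supp_in x E0"
    proof
      fix x assume "x \<in> X"
      then show "supp_in x E0" using lsub_supp[OF insert.prems(1)] True unfolding supp_in_def
        by (metis insert_iff)
    qed
    then have lsub0: "lsub E0 X" using insert.prems(1) unfolding lsub_def by blast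
    show ?thesis
    proof (cases "v a = 0")
      case False
      define y where "y = (\<lambda>i. if i = a then (1::'a) else 0)"
      have dy: "dotE E0 x y = 0" for x unfolding dotE_def y_def using insert.hyps(2)
        by (intro sum.neutral) auto
      have "supp_in y (insert a E0)" unfolding y_def supp_in_def by auto
      moreover have "\<forall>x\<in>X. dotE (insert a E0) x y = 0" using True dins dy unfolding y_def by simp
      moreover have "dotE (insert a E0) v y \<noteq> 0" using False dins dy unfolding y_def by simp
      ultimately show ?thesis by blast
    next
      case va: True
      have "supp_in v E0" using insert.prems(2) va unfolding supp_in_def by auto
      from IH[OF lsub0 this insert.prems(3)] obtain y where
        y: "supp_in y E0" "\<forall>x\<in>X. dotE E0 x y = 0" "dotE E0 v y \<noteq> 0" by blast
      have ya: "y a = 0" using y(1) insert.hyps unfolding supp_in_def by auto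
      have "supp_in y (insert a E0)" using y(1) unfolding supp_in_def by auto
      moreover have "\<forall>x\<in>X. dotE (insert a E0) x y = 0" using y(2) dins ya by simp
      moreover have "dotE (insert a E0) v y \<noteq> 0" using y(3) dins ya by simp
      ultimately show ?thesis by blast
    qed
  next
    case False
    then obtain w0 where w0: "w0 \<in> X" "w0 a \<noteq> 0" by blast
    define p where "p = (\<lambda>i. (1 / w0 a) * w0 i)"
    have pX: "p \<in> X" unfolding p_def by (rule lsub_smult[OF insert.prems(1) w0(1)])
    have pa: "p a = 1" unfolding p_def using w0 by simp
    define X' where "X' = {w \<in> X. w a = 0}"
    have lsubX': "lsub E0 X'"
    proof -
      have "(\<lambda>_. 0) \<in> X'" using lsub_zero[OF insert.prems(1)] unfolding X'_def by simp
      moreover have "\<forall>x\<in>X'. supp_in x E0"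
      proof
        fix x assume "x \<in> X'"
        then have x: "x \<in> X" "x a = 0" unfolding X'_def by auto
        have s: "supp_in x (insert a E0)" by (rule lsub_supp[OF insert.prems(1) x(1)])
        show "supp_in x E0" unfolding supp_in_def
        proof (intro allI impI)
          fix i assume "i \<notin> E0"
          then show "x i = 0" using s x(2) unfolding supp_in_def by (cases "i = a") auto
        qed
      qed
      moreover have "\<forall>x\<in>X'. \<forall>y\<in>X'. (\<lambda>i. x i + y i) \<in> X'"
        using lsub_lin[OF insert.prems(1), of _ _ 1] unfolding X'_def by auto
      moreover have "\<forall>c. \<forall>x\<in>X'. (\<lambda>i. c * x i) \<in> X'"
        using lsub_smult[OF insert.prems(1)] unfolding X'_def by auto
      ultimately show ?thesis unfolding lsub_def by blast
    qed
    define v' where "v' = (\<lambda>i. v i - v a * p i)"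
    have v'supp: "supp_in v' E0"
      unfolding supp_in_def
    proof (intro allI impI)
      fix i assume i: "i \<notin> E0"
      show "v' i = 0"
      proof (cases "i = a")
        case True then show ?thesis using pa unfolding v'_def by simp
      next
        case False
        then have "v i = 0" "p i = 0" using i insert.prems(2) lsub_supp[OF insert.prems(1) pX]
          unfolding supp_in_def by auto
        then show ?thesis unfolding v'_def by simp
      qed
    qed
    have v'X: "v' \<notin> X'"
    proof
      assume "v' \<in> X'"
      then have "(\<lambda>i. v' i + v a * p i) \<in> X" using lsub_lin[OF insert.prems(1) _ pX] unfolding X'_def by blast
      moreover have "(\<lambda>i. v' i + v a * p i) = v" unfolding v'_def by auto
      ultimately show False using insert.prems(3) by simp
    qed
    from IH[OF lsubX' v'supp v'X] obtain y0 where
      y0: "supp_in y0 E0" "\<forall>x\<in>X'. dotE E0 x y0 = 0" "dotE E0 v' y0 \<noteq> 0" by blast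
    have y0a: "y0 a = 0" using y0(1) insert.hyps unfolding supp_in_def by auto
    define t where "t = dotE E0 p y0"
    define y where "y = (\<lambda>i. y0 i - (if i = a then t else 0))"
    have dy: "dotE (insert a E0) x y = dotE E0 x y0 - t * x a" for x
    proof -
      have "dotE E0 x y = dotE E0 x y0" unfolding dotE_def y_def using insert.hyps
        by (intro sum.cong) auto
      then show ?thesis using dins[of x y] y0a unfolding y_def by (simp add: algebra_simps)
    qed
    have lin: "dotE E0 (\<lambda>i. x i - c * z i) y0 = dotE E0 x y0 - c * dotE E0 z y0" for x z c
      unfolding dotE_def by (simp add: algebra_simps sum_subtractf sum_distrib_left)
    have "supp_in y (insert a E0)" using y0(1) unfolding y_def supp_in_def by auto
    moreover have "\<forall>x\<in>X. dotE (insert a E0) x y = 0"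
    proof
      fix x assume x: "x \<in> X"
      have "(\<lambda>i. x i - x a * p i) \<in> X'" unfolding X'_def using lsub_diff[OF insert.prems(1) x pX] pa
        by simp
      then have "dotE E0 (\<lambda>i. x i - x a * p i) y0 = 0" using y0(2) by blast
      then have "dotE E0 x y0 - x a * t = 0" using lin[of x "x a" p] unfolding t_def by simp
      then show "dotE (insert a E0) x y = 0" unfolding dy by (simp add: mult.commute)
    qed
    moreover have "dotE (insert a E0) v y \<noteq> 0"
    proof -
      have "dotE E0 v' y0 = dotE E0 v y0 - v a * t" unfolding v'_def t_def by (rule lin)
      then show ?thesis using y0(3) unfolding dy by (simp add: mult.commute)
    qed
    ultimately show ?thesis by blast
  qed
qed

lemma double_perp:
  assumes "lsub E X" "finite E" shows "perp E (perp E X) = X"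
proof
  show "X \<subseteq> perp E (perp E X)"
    using lsub_supp[OF assms(1)] unfolding perp_def by (auto simp: dotE_comm)
  show "perp E (perp E X) \<subseteq> X"
  proof
    fix v assume v: "v \<in> perp E (perp E X)"
    show "v \<in> X"
    proof (rule ccontr)
      assume "v \<notin> X"
      moreover have "supp_in v E" using v unfolding perp_def by blast
      ultimately obtain y where "supp_in y E" "\<forall>x\<in>X. dotE E x y = 0" "dotE E v y \<noteq> 0"
        using key[OF assms(2) assms(1)] by blast
      then have "y \<in> perp E X" unfolding perp_def by blast
      then have "dotE E y v = 0" using v unfolding perp_def by blast
      then show False using \<open>dotE E v y \<noteq> 0\<close> by (simp add: dotE_comm)
    qed
  qed
qed

lemma sep_dual:
  assumes "lsub E X" "finite E" shows "sep X S \<longleftrightarrow> sep (perp E X) S"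
  using sep_perp[of X S E] sep_perp[of "perp E X" S E] double_perp[OF assms] by auto

lemma rel_dual:
  assumes "lsub E X" "finite E" "e \<in> E" "f \<in> E"
  shows "rel X e f \<longleftrightarrow> rel (perp E X) e f"
proof -
  have "nosep X e f \<longleftrightarrow> nosep (perp E X) e f"
    unfolding nosep_def using sep_dual[OF assms(1,2)] by blast
  then show ?thesis
    using rel_iff_nosep[OF assms] rel_iff_nosep[OF lsub_perp assms(2-4)] by blast
qed

definition delta :: "nat \<Rightarrow> nat \<Rightarrow> 'a::zero_neq_one" where
  "delta a = (\<lambda>i. if i = a then 1 else 0)"

lemma T3:
  assumes "lsub E X" "finite E"
  shows "(\<forall>i\<in>E. delta i \<in> X) \<longleftrightarrow> (\<forall>y\<in>perp E X. \<forall>i. y i = 0)"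
proof
  assume A: "\<forall>i\<in>E. delta i \<in> X"
  show "\<forall>y\<in>perp E X. \<forall>i. y i = 0"
  proof (intro ballI allI)
    fix y i assume y: "y \<in> perp E X"
    show "y i = 0"
    proof (cases "i \<in> E")
      case True
      then have "dotE E (delta i) y = 0" using A y unfolding perp_def by blast
      moreover have "dotE E (delta i) y = (\<Sum>j\<in>E. if j = i then y j else 0)"
        unfolding dotE_def by (rule sum.cong) (auto simp: delta_def)
      moreover have "(\<Sum>j\<in>E. if j = i then y j else 0) = y i"
        using True assms(2) by (simp add: sum.delta')
      ultimately show ?thesis by simp
    next
      case False then show ?thesis using y unfolding perp_def supp_in_def by blast
    qed
  qed
next
  assume B: "\<forall>y\<in>perp E X. \<forall>i. y i = 0"
  show "\<forall>i\<in>E. delta i \<in> X"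
  proof (rule ccontr)
    assume "\<not> (\<forall>i\<in>E. delta i \<in> X)"
    then obtain i where i: "i \<in> E" "delta i \<notin> X" by blast
    have "supp_in (delta i) E" using i unfolding delta_def supp_in_def by auto
    then obtain y where y: "supp_in y E" "\<forall>x\<in>X. dotE E x y = 0" "dotE E (delta i) y \<noteq> 0"
      using key[OF assms(2) assms(1)] i by blast
    then have "y \<in> perp E X" unfolding perp_def by blast
    then have "\<forall>j. y j = 0" using B by blast
    then show False using y(3) unfolding dotE_def by simp
  qed
qed



definition aconn :: "(nat \<Rightarrow> 'a::zero) set \<Rightarrow> nat set \<Rightarrow> bool" where
  "aconn X C \<longleftrightarrow> (\<forall>e\<in>C. \<forall>f\<in>C. e \<noteq> f \<longrightarrow> (\<exists>S. acirc X S \<and> S \<subseteq> C \<and> e \<in> S \<and> f \<in> S))"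

definition acomp :: "(nat \<Rightarrow> 'a::zero) set \<Rightarrow> nat set \<Rightarrow> nat set \<Rightarrow> bool" where
  "acomp X E C \<longleftrightarrow> C \<noteq> {} \<and> C \<subseteq> E \<and> aconn X C \<and> (\<forall>C'. C \<subset> C' \<and> C' \<subseteq> E \<longrightarrow> \<not> aconn X C')"

lemma aconn_iff:
  assumes "lsub E X" shows "aconn X E \<longleftrightarrow> (\<forall>e\<in>E. \<forall>f\<in>E. rel X e f)"
  unfolding aconn_def rel_def using acirc_sub[OF assms] by blast

lemma class_aconn:
  assumes E: "lsub E X" "finite E"
  shows "aconn X {f \<in> E. rel X e f}"
  unfolding aconn_def
proof (intro ballI impI)
  fix f f' assume f: "f \<in> {f \<in> E. rel X e f}" and f': "f' \<in> {f \<in> E. rel X e f}" and ne: "f \<noteq> f'"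
  have "rel X f f'" using f f' rel_sym rel_trans[OF E] by blast
  then obtain S where S: "acirc X S" "f \<in> S" "f' \<in> S" using ne unfolding rel_def by blast
  have "S \<subseteq> {f \<in> E. rel X e f}"
  proof
    fix g assume "g \<in> S"
    then have "rel X f g" using S unfolding rel_def by blast
    then have "rel X e g" using f rel_trans[OF E] by blast
    moreover have "g \<in> E" using acirc_sub[OF E(1) S(1)] \<open>g \<in> S\<close> by blast
    ultimately show "g \<in> {f \<in> E. rel X e f}" by blast
  qed
  then show "\<exists>S. acirc X S \<and> S \<subseteq> {f \<in> E. rel X e f} \<and> f \<in> S \<and> f' \<in> S" using S by blast
qed

lemma acomp_iff:
  assumes E: "lsub E X" "finite E"
  shows "acomp X E C \<longleftrightarrow> (\<exists>e\<in>E. C = {f \<in> E. rel X e f})"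
proof
  assume A: "acomp X E C"
  then obtain e where e: "e \<in> C" unfolding acomp_def by blast
  have CE: "C \<subseteq> E" using A unfolding acomp_def by blast
  have sub: "C \<subseteq> {f \<in> E. rel X e f}"
  proof
    fix f assume f: "f \<in> C"
    show "f \<in> {f \<in> E. rel X e f}"
    proof (cases "e = f")
      case True then show ?thesis using f CE rel_refl by fastforce
    next
      case False
      then have "rel X e f" using A e f unfolding acomp_def aconn_def rel_def by blast
      then show ?thesis using f CE by blast
    qed
  qed
  have "C = {f \<in> E. rel X e f}"
  proof (rule ccontr)
    assume "C \<noteq> {f \<in> E. rel X e f}"
    then have "C \<subset> {f \<in> E. rel X e f}" using sub by blast
    moreover have "{f \<in> E. rel X e f} \<subseteq> E" by blast
    ultimately show False using A class_aconn[OF E, of e] unfolding acomp_def by blast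
  qed
  then show "\<exists>e\<in>E. C = {f \<in> E. rel X e f}" using e CE by blast
next
  assume "\<exists>e\<in>E. C = {f \<in> E. rel X e f}"
  then obtain e where e: "e \<in> E" "C = {f \<in> E. rel X e f}" by blast
  have "C \<noteq> {}" using e rel_refl by fastforce
  moreover have "C \<subseteq> E" using e by blast
  moreover have "aconn X C" using e class_aconn[OF E] by simp
  moreover have "\<not> aconn X C'" if C': "C \<subset> C'" "C' \<subseteq> E" for C'
  proof
    assume c: "aconn X C'"
    obtain f where f: "f \<in> C'" "f \<notin> C" using C' by blast
    have eC: "e \<in> C" using e rel_refl by fastforce
    then have "e \<in> C'" using C' by blast
    moreover have "e \<noteq> f" using eC f by blast
    ultimately obtain S where "acirc X S" "e \<in> S" "f \<in> S" using c f unfolding aconn_def by blast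
    then have "rel X e f" unfolding rel_def by blast
    then show False using f C' e by blast
  qed
  ultimately show "acomp X E C" unfolding acomp_def by blast
qed

lemma acomp_dual:
  assumes E: "lsub E X" "finite E"
  shows "acomp X E C \<longleftrightarrow> acomp (perp E X) E C"
proof -
  have "{f \<in> E. rel X e f} = {f \<in> E. rel (perp E X) e f}" if "e \<in> E" for e
    using rel_dual[OF E that] by blast
  then show ?thesis using acomp_iff[OF E] acomp_iff[OF lsub_perp E(2)] by metis
qed

lemma aconn_dual:
  assumes E: "lsub E X" "finite E"
  shows "aconn X E \<longleftrightarrow> aconn (perp E X) E"
  using aconn_iff[OF E(1)] aconn_iff[OF lsub_perp] rel_dual[OF E] by metis

lemma acomp_sep:
  assumes E: "lsub E X" "finite E" and "acomp X E C" shows "sep X C"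
  using acomp_iff[OF E] assms(3) sep_class[OF E] by metis



definition XS :: "'a::field mat \<Rightarrow> 'a vec set \<Rightarrow> nat set \<Rightarrow> (nat \<Rightarrow> 'a) set" where
  "XS M K E = {x. supp_in x E \<and> lincomb_cols M x E \<in> K}"

definition vsub :: "nat \<Rightarrow> 'a::field vec set \<Rightarrow> bool" where
  "vsub m K \<longleftrightarrow> K \<subseteq> carrier_vec m \<and> 0\<^sub>v m \<in> K \<and> (\<forall>a\<in>K. \<forall>b\<in>K. a + b \<in> K) \<and>
     (\<forall>c. \<forall>a\<in>K. c \<cdot>\<^sub>v a \<in> K)"

lemma lc_carrier[simp]: "lincomb_cols M x S \<in> carrier_vec (dim_row M)"
  unfolding lincomb_cols_def by simp

lemma lc_dim[simp]: "dim_vec (lincomb_cols M x S) = dim_row M"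
  unfolding lincomb_cols_def by simp

lemma lc_cong: "(\<And>i. i \<in> S \<Longrightarrow> x i = y i) \<Longrightarrow> lincomb_cols M x S = lincomb_cols M y S"
  unfolding lincomb_cols_def by (intro eq_vecI) auto

lemma lc_sub:
  assumes "finite E" "S \<subseteq> E" "supp_in x S"
  shows "lincomb_cols M x E = lincomb_cols M x S"
  unfolding lincomb_cols_def
proof (intro eq_vecI)
  fix r assume "r < dim_vec (vec (dim_row M) (\<lambda>r. \<Sum>i\<in>S. x i * M $$ (r, i)))"
  then have r: "r < dim_row M" by simp
  have "(\<Sum>i\<in>E. x i * M $$ (r, i)) = (\<Sum>i\<in>S. x i * M $$ (r, i))"
    using assms unfolding supp_in_def by (intro sum.mono_neutral_right) auto
  then show "vec (dim_row M) (\<lambda>r. \<Sum>i\<in>E. x i * M $$ (r, i)) $ r =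
        vec (dim_row M) (\<lambda>r. \<Sum>i\<in>S. x i * M $$ (r, i)) $ r" using r by simp
qed simp

lemma lc_lin:
  "lincomb_cols M (\<lambda>i. x i + c * y i) E = lincomb_cols M x E + c \<cdot>\<^sub>v lincomb_cols M y E"
  unfolding lincomb_cols_def
  by (intro eq_vecI) (auto simp: algebra_simps sum.distrib sum_distrib_left)

lemma lc_smult:
  "lincomb_cols M (\<lambda>i. c * y i) E = c \<cdot>\<^sub>v lincomb_cols M y E"
  unfolding lincomb_cols_def
  by (intro eq_vecI) (auto simp: algebra_simps sum_distrib_left)

lemma lc_zero: "lincomb_cols M (\<lambda>_. 0) E = 0\<^sub>v (dim_row M)"
  unfolding lincomb_cols_def by (intro eq_vecI) auto

lemma lsub_XS:
  assumes "vsub (dim_row M) K" shows "lsub E (XS M K E)"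
proof -
  have "(\<lambda>_. 0) \<in> XS M K E" using assms unfolding XS_def vsub_def supp_in_def by (simp add: lc_zero)
  moreover have "\<forall>x\<in>XS M K E. supp_in x E" unfolding XS_def by blast
  moreover have "(\<lambda>i. x i + y i) \<in> XS M K E" if "x \<in> XS M K E" "y \<in> XS M K E" for x y
  proof -
    have "lincomb_cols M (\<lambda>i. x i + y i) E = lincomb_cols M x E + lincomb_cols M y E"
      using lc_lin[of M x 1 y E] by simp
    then show ?thesis using that assms unfolding XS_def vsub_def supp_in_def by auto
  qed
  moreover have "(\<lambda>i. c * x i) \<in> XS M K E" if "x \<in> XS M K E" for x c
    using that assms unfolding XS_def vsub_def supp_in_def by (auto simp: lc_smult)
  ultimately show ?thesis unfolding lsub_def by blast
qed

lemma XS_sub: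
  assumes "finite E" "C \<subseteq> E"
  shows "XS M K C = {x \<in> XS M K E. supp_in x C}"
proof -
  have "supp_in x C \<Longrightarrow> supp_in x E" for x :: "nat \<Rightarrow> 'a"
    using assms(2) unfolding supp_in_def by blast
  moreover have "lincomb_cols M x E = lincomb_cols M x C" if "supp_in x C" for x
    by (rule lc_sub[OF assms that])
  ultimately have "x \<in> XS M K C \<longleftrightarrow> x \<in> {x \<in> XS M K E. supp_in x C}" for x
    unfolding XS_def by (cases "supp_in x C") auto
  then show ?thesis by blast
qed

lemma mdep_XS:
  assumes "finite E" "S \<subseteq> E"
  shows "mdep M K S \<longleftrightarrow> sdep (XS M K E) S"
proof
  assume "mdep M K S"
  then obtain \<alpha> i where a: "i \<in> S" "\<alpha> i \<noteq> 0" "lincomb_cols M \<alpha> S \<in> K" unfolding mdep_def by blast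
  define x where "x = restr \<alpha> S"
  have sx: "supp_in x S" unfolding x_def by (rule restr_supp)
  have "lincomb_cols M x E = lincomb_cols M x S" by (rule lc_sub[OF assms sx])
  also have "\<dots> = lincomb_cols M \<alpha> S" unfolding x_def restr_def by (rule lc_cong) simp
  finally have "x \<in> XS M K E" using sx a(3) assms(2) unfolding XS_def supp_in_def by auto
  moreover have "x i \<noteq> 0" using a unfolding x_def restr_def by simp
  ultimately show "sdep (XS M K E) S" using sx a(1) unfolding sdep_def by blast
next
  assume "sdep (XS M K E) S"
  then obtain x i where x: "x \<in> XS M K E" "supp_in x S" "i \<in> S" "x i \<noteq> 0" unfolding sdep_def by blast
  have "lincomb_cols M x S = lincomb_cols M x E" by (rule lc_sub[OF assms x(2), symmetric])
  then show "mdep M K S" using x unfolding mdep_def XS_def by auto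
qed

lemma Max_rank_lemmas:
  fixes D :: "nat set \<Rightarrow> bool"
  assumes fin: "finite E" and mono: "\<And>T S. T \<subseteq> S \<Longrightarrow> S \<subseteq> E \<Longrightarrow> D T \<Longrightarrow> D S" and nd: "\<not> D {}"
  shows "Max {card S | S. S \<subseteq> E \<and> \<not> D S} = 0 \<longleftrightarrow> (\<forall>i\<in>E. D {i})"
    and "Max {card S | S. S \<subseteq> E \<and> \<not> D S} = card E \<longleftrightarrow> \<not> D E"
proof -
  let ?M = "{card S | S. S \<subseteq> E \<and> \<not> D S}"
  have finM: "finite ?M" using fin by simp
  have "0 = card ({}::nat set) \<and> {} \<subseteq> E \<and> \<not> D {}" using nd by simp
  then have ne: "0 \<in> ?M" by blast
  have Mne: "?M \<noteq> {}" using ne by blast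
  have le: "\<forall>k\<in>?M. k \<le> card E" using fin card_mono by blast
  show "Max ?M = 0 \<longleftrightarrow> (\<forall>i\<in>E. D {i})"
  proof
    assume m: "Max ?M = 0"
    show "\<forall>i\<in>E. D {i}"
    proof (rule ccontr)
      assume "\<not> (\<forall>i\<in>E. D {i})"
      then obtain i where "i \<in> E" "\<not> D {i}" by blast
      then have "card {i} \<in> ?M" by blast
      then have "1 \<in> ?M" by simp
      then have "1 \<le> Max ?M" using Max_ge[OF finM] by blast
      then show False using m by simp
    qed
  next
    assume d: "\<forall>i\<in>E. D {i}"
    have "\<forall>k\<in>?M. k = 0"
    proof
      fix k assume "k \<in> ?M"
      then obtain S where S: "k = card S" "S \<subseteq> E" "\<not> D S" by blast
      have "S = {}"
      proof (rule ccontr)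
        assume "S \<noteq> {}"
        then obtain i where "i \<in> S" by blast
        then have "D S" using mono[of "{i}" S] d S(2) by blast
        then show False using S(3) by blast
      qed
      then show "k = 0" using S by simp
    qed
    then show "Max ?M = 0" using Max_in[OF finM Mne] by blast
  qed
  show "Max ?M = card E \<longleftrightarrow> \<not> D E"
  proof
    assume m: "Max ?M = card E"
    have "Max ?M \<in> ?M" using Max_in[OF finM Mne] .
    then obtain S where S: "card S = card E" "S \<subseteq> E" "\<not> D S" using m by auto
    then have "S = E" using card_subset_eq[OF fin S(2) S(1)] by blast
    then show "\<not> D E" using S by simp
  next
    assume "\<not> D E"
    then have "card E \<in> ?M" by blast
    then show "Max ?M = card E" using Max_eqI[OF finM] le by blast
  qed
qed

lemma sdep_single:
  assumes "lsub E X" shows "sdep X {i} \<longleftrightarrow> delta i \<in> X"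
proof
  assume "sdep X {i}"
  then obtain x where x: "x \<in> X" "supp_in x {i}" "x i \<noteq> 0" unfolding sdep_def by blast
  have "(\<lambda>j. (1 / x i) * x j) \<in> X" by (rule lsub_smult[OF assms x(1)])
  moreover have "(\<lambda>j. (1 / x i) * x j) = delta i"
    using x unfolding delta_def supp_in_def by auto
  ultimately show "delta i \<in> X" by simp
next
  assume "delta i \<in> X"
  moreover have "supp_in (delta i) {i}" unfolding delta_def supp_in_def by simp
  moreover have "delta i i \<noteq> 0" unfolding delta_def by simp
  ultimately show "sdep X {i}" unfolding sdep_def by blast
qed

lemma sdep_full:
  assumes "lsub E X" shows "\<not> sdep X E \<longleftrightarrow> (\<forall>x\<in>X. \<forall>i. x i = 0)"
  using lsub_supp[OF assms] unfolding sdep_def supp_in_def by blast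

lemma mrank_lemmas:
  assumes K: "vsub (dim_row M) K" and fin: "finite E"
  shows "mrank M K E = 0 \<longleftrightarrow> (\<forall>i\<in>E. delta i \<in> XS M K E)"
    and "mrank M K E = card E \<longleftrightarrow> (\<forall>x\<in>XS M K E. \<forall>i. x i = 0)"
proof -
  let ?X = "XS M K E"
  have eq: "mrank M K E = Max {card S | S. S \<subseteq> E \<and> \<not> mdep M K S}"
    unfolding mrank_def mindep_def by simp
  have mono: "mdep M K S" if "T \<subseteq> S" "S \<subseteq> E" "mdep M K T" for T S
  proof -
    have "sdep ?X T" using that mdep_XS[OF fin] by blast
    then have "sdep ?X S" using that(1) by (rule sdep_mono)
    then show ?thesis using mdep_XS[OF fin that(2)] by blast
  qed
  have nd: "\<not> mdep M K {}" unfolding mdep_def by blast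
  note R = Max_rank_lemmas[OF fin, of "mdep M K", OF mono nd]
  have "(\<forall>i\<in>E. mdep M K {i}) \<longleftrightarrow> (\<forall>i\<in>E. delta i \<in> ?X)"
    using mdep_XS[OF fin] sdep_single[OF lsub_XS[OF K]] by blast
  then show "mrank M K E = 0 \<longleftrightarrow> (\<forall>i\<in>E. delta i \<in> ?X)" using R(1) eq by simp
  have "\<not> mdep M K E \<longleftrightarrow> (\<forall>x\<in>?X. \<forall>i. x i = 0)"
    using mdep_XS[OF fin, of E] sdep_full[OF lsub_XS[OF K]] by blast
  then show "mrank M K E = card E \<longleftrightarrow> (\<forall>x\<in>?X. \<forall>i. x i = 0)" using R(2) eq by simp
qed

lemma mcircuit_XS:
  assumes "finite E" "S \<subseteq> E"
  shows "mcircuit M K S \<longleftrightarrow> acirc (XS M K E) S"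
proof -
  have "\<forall>T. T \<subset> S \<longrightarrow> (mdep M K T \<longleftrightarrow> sdep (XS M K E) T)"
    using mdep_XS[OF assms(1)] assms(2) by blast
  then show ?thesis unfolding mcircuit_def acirc_def mindep_def using mdep_XS[OF assms] by blast
qed

lemma mconnected_XS:
  assumes "finite E" "C \<subseteq> E"
  shows "mconnected M K C \<longleftrightarrow> aconn (XS M K E) C"
proof -
  have "\<forall>S. S \<subseteq> C \<longrightarrow> (mcircuit M K S \<longleftrightarrow> acirc (XS M K E) S)"
    using mcircuit_XS[OF assms(1)] assms(2) by blast
  then show ?thesis unfolding mconnected_def aconn_def by blast
qed

lemma mcomponent_XS:
  assumes "finite E"
  shows "mcomponent M K E C \<longleftrightarrow> acomp (XS M K E) E C"
proof -
  have "\<forall>C'. C' \<subseteq> E \<longrightarrow> (mconnected M K C' \<longleftrightarrow> aconn (XS M K E) C')"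
    using mconnected_XS[OF assms] by blast
  then show ?thesis unfolding mcomponent_def acomp_def by blast
qed



lemma vsub_zero: "vsub m {0\<^sub>v m :: 'a::field vec}"
  unfolding vsub_def by auto

lemma vsub_add_span:
  assumes K: "vsub m K" and v: "v \<in> carrier_vec m"
  shows "vsub m (add_span K v)"
proof -
  have Kc: "\<And>k. k \<in> K \<Longrightarrow> k \<in> carrier_vec m" using K unfolding vsub_def by blast
  have dv: "dim_vec v = m" using v by simp
  have "add_span K v \<subseteq> carrier_vec m" unfolding add_span_def using Kc v by auto
  moreover have "0\<^sub>v m \<in> add_span K v"
  proof -
    have "0\<^sub>v m = 0\<^sub>v m + 0 \<cdot>\<^sub>v v" using dv by (intro eq_vecI) auto
    then show ?thesis using K unfolding add_span_def vsub_def by blast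
  qed
  moreover have "a + b \<in> add_span K v" if ab: "a \<in> add_span K v" "b \<in> add_span K v" for a b
  proof -
    obtain k1 c1 k2 c2 where k: "a = k1 + c1 \<cdot>\<^sub>v v" "k1 \<in> K" "b = k2 + c2 \<cdot>\<^sub>v v" "k2 \<in> K"
      using ab unfolding add_span_def by blast
    have "a + b = (k1 + k2) + (c1 + c2) \<cdot>\<^sub>v v"
      using k Kc[OF k(2)] Kc[OF k(4)] dv by (intro eq_vecI) (auto simp: algebra_simps)
    moreover have "k1 + k2 \<in> K" using K k unfolding vsub_def by blast
    ultimately show ?thesis unfolding add_span_def by blast
  qed
  moreover have "c \<cdot>\<^sub>v a \<in> add_span K v" if a: "a \<in> add_span K v" for a c
  proof -
    obtain k1 c1 where k: "a = k1 + c1 \<cdot>\<^sub>v v" "k1 \<in> K"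
      using a unfolding add_span_def by blast
    have "c \<cdot>\<^sub>v a = (c \<cdot>\<^sub>v k1) + (c * c1) \<cdot>\<^sub>v v"
      using k Kc[OF k(2)] dv by (intro eq_vecI) (auto simp: algebra_simps)
    moreover have "c \<cdot>\<^sub>v k1 \<in> K" using K k unfolding vsub_def by blast
    ultimately show ?thesis unfolding add_span_def by blast
  qed
  ultimately show ?thesis unfolding vsub_def by blast
qed

definition spanext :: "(nat \<Rightarrow> 'a::field) set \<Rightarrow> (nat \<Rightarrow> 'a) \<Rightarrow> (nat \<Rightarrow> 'a) set" where
  "spanext X u = {(\<lambda>i. x i + c * u i) | x c. x \<in> X}"

lemma dotE_lin: "dotE E (\<lambda>i. x i + c * u i) y = dotE E x y + c * dotE E u y"
  unfolding dotE_def by (simp add: algebra_simps sum.distrib sum_distrib_left)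

lemma perp_spanext:
  assumes "lsub E X"
  shows "perp E (spanext X u) = {y \<in> perp E X. dotE E u y = 0}"
proof (rule equalityI; rule subsetI)
  fix y assume y: "y \<in> perp E (spanext X u)"
  have "x \<in> X \<Longrightarrow> (\<lambda>i. x i + 0 * u i) \<in> spanext X u" for x unfolding spanext_def by blast
  then have "x \<in> X \<Longrightarrow> dotE E x y = 0" for x using y unfolding perp_def by fastforce
  moreover have "u \<in> spanext X u" unfolding spanext_def
    by (intro CollectI exI[of _ "\<lambda>_. 0"] exI[of _ 1] conjI) (simp_all add: lsub_zero[OF assms])
  then have "dotE E u y = 0" using y unfolding perp_def by blast
  ultimately show "y \<in> {y \<in> perp E X. dotE E u y = 0}" using y unfolding perp_def by blast
next
  fix y assume y: "y \<in> {y \<in> perp E X. dotE E u y = 0}"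
  show "y \<in> perp E (spanext X u)" unfolding perp_def spanext_def
    using y unfolding perp_def by (auto simp: dotE_lin)
qed

lemma perp_restrict:
  assumes E: "lsub E X" "finite E" and s: "sep X C" and CE: "C \<subseteq> E"
  shows "perp C {x \<in> X. supp_in x C} = {y \<in> perp E X. supp_in y C}"
proof (rule equalityI; rule subsetI)
  fix y assume y: "y \<in> perp C {x \<in> X. supp_in x C}"
  then have yC: "supp_in y C" unfolding perp_def by blast
  then have yE: "supp_in y E" using CE unfolding supp_in_def by blast
  have "dotE E x y = 0" if x: "x \<in> X" for x
  proof -
    have rX: "restr x C \<in> X" using s x unfolding sep_def by blast
    have "dotE E x y = dotE E (restr x C) y"
      unfolding dotE_def restr_def using yC unfolding supp_in_def by (intro sum.cong) auto
    also have "\<dots> = dotE C (restr x C) y"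
      unfolding dotE_def using E(2) CE by (intro sum.mono_neutral_right) (auto simp: restr_def)
    also have "\<dots> = 0" using y rX restr_supp[of x C] unfolding perp_def by blast
    finally show ?thesis .
  qed
  then show "y \<in> {y \<in> perp E X. supp_in y C}" using yC yE unfolding perp_def by blast
next
  fix y assume y: "y \<in> {y \<in> perp E X. supp_in y C}"
  have "dotE C x y = 0" if x: "x \<in> X" "supp_in x C" for x
  proof -
    have "dotE E x y = dotE C x y"
      unfolding dotE_def using E(2) CE x(2) unfolding supp_in_def by (intro sum.mono_neutral_right) auto
    then show ?thesis using y x unfolding perp_def by auto
  qed
  then show "y \<in> perp C {x \<in> X. supp_in x C}" using y unfolding perp_def by blast
qed

lemma XS_add_span2:
  assumes K: "vsub (dim_row A) K"
  shows "XS A (add_span K (lincomb_cols A u E)) E = spanext (XS A K E) (restr u E)"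
proof -
  let ?w = "lincomb_cols A u E"
  let ?u = "restr u E"
  have Kc: "\<And>k. k \<in> K \<Longrightarrow> k \<in> carrier_vec (dim_row A)" using K unfolding vsub_def by blast
  have lu: "lincomb_cols A ?u E = ?w" unfolding restr_def by (rule lc_cong) simp
  have su: "supp_in ?u E" by (rule restr_supp)
  show ?thesis
  proof (rule equalityI; rule subsetI)
    fix x assume "x \<in> XS A (add_span K ?w) E"
    then obtain k c where x: "supp_in x E" "lincomb_cols A x E = k + c \<cdot>\<^sub>v ?w" "k \<in> K"
      unfolding XS_def add_span_def by blast
    define x' where "x' = (\<lambda>i. x i + (- c) * ?u i)"
    have "lincomb_cols A x' E = lincomb_cols A x E + (-c) \<cdot>\<^sub>v ?w" unfolding x'_def lc_lin lu ..
    also have "\<dots> = k" using x Kc[OF x(3)] by (intro eq_vecI) auto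
    finally have "x' \<in> XS A K E" using x su unfolding XS_def x'_def supp_in_def by auto
    moreover have "x = (\<lambda>i. x' i + c * ?u i)" unfolding x'_def by auto
    ultimately show "x \<in> spanext (XS A K E) ?u" unfolding spanext_def by blast
  next
    fix x assume "x \<in> spanext (XS A K E) ?u"
    then obtain x' c where x: "x = (\<lambda>i. x' i + c * ?u i)" "x' \<in> XS A K E" unfolding spanext_def by blast
    have "lincomb_cols A x E = lincomb_cols A x' E + c \<cdot>\<^sub>v ?w" unfolding x lc_lin lu ..
    moreover have "supp_in x E" using x su unfolding XS_def supp_in_def by auto
    ultimately show "x \<in> XS A (add_span K ?w) E" using x(2) unfolding XS_def add_span_def by blast
  qed
qed

lemma XS_add_span:
  assumes K: "vsub (dim_row A) K" and v: "v \<in> carrier_vec (dim_row A)"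
  shows "\<exists>u. supp_in u E \<and> XS A (add_span K v) E = spanext (XS A K E) u"
proof -
  have Kc: "\<And>k. k \<in> K \<Longrightarrow> k \<in> carrier_vec (dim_row A)" using K unfolding vsub_def by blast
  have KK: "K \<subseteq> add_span K v"
  proof
    fix k assume k: "k \<in> K"
    have "k = k + 0 \<cdot>\<^sub>v v" using Kc[OF k] v by (intro eq_vecI) auto
    then show "k \<in> add_span K v" unfolding add_span_def using k by blast
  qed
  show ?thesis
  proof (cases "XS A (add_span K v) E \<subseteq> XS A K E")
    case True
    have "XS A K E \<subseteq> XS A (add_span K v) E" using KK unfolding XS_def by blast
    then have eq: "XS A (add_span K v) E = XS A K E" using True by blast
    have "spanext (XS A K E) (\<lambda>_. 0) = XS A K E" unfolding spanext_def by auto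
    moreover have "supp_in (\<lambda>_. 0::'a) E" unfolding supp_in_def by simp
    ultimately show ?thesis using eq by metis
  next
    case False
    then obtain x0 where x0: "x0 \<in> XS A (add_span K v) E" "x0 \<notin> XS A K E" by blast
    then obtain k0 c0 where k0: "supp_in x0 E" "lincomb_cols A x0 E = k0 + c0 \<cdot>\<^sub>v v" "k0 \<in> K"
      unfolding XS_def add_span_def by blast
    have c0: "c0 \<noteq> 0"
    proof
      assume "c0 = 0"
      then have "lincomb_cols A x0 E = k0" using k0 Kc[OF k0(3)] v by (intro eq_vecI) auto
      then show False using x0 k0 unfolding XS_def by auto
    qed
    have "XS A (add_span K v) E = spanext (XS A K E) x0"
    proof (rule equalityI; rule subsetI)
      fix x assume "x \<in> XS A (add_span K v) E"
      then obtain k c where x: "supp_in x E" "lincomb_cols A x E = k + c \<cdot>\<^sub>v v" "k \<in> K"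
        unfolding XS_def add_span_def by blast
      define d where "d = c / c0"
      define x' where "x' = (\<lambda>i. x i + (- d) * x0 i)"
      have "lincomb_cols A x' E = lincomb_cols A x E + (-d) \<cdot>\<^sub>v lincomb_cols A x0 E"
        unfolding x'_def lc_lin ..
      also have "\<dots> = k + (-d) \<cdot>\<^sub>v k0"
        using x k0 Kc[OF x(3)] Kc[OF k0(3)] v c0 unfolding d_def
        by (intro eq_vecI) (auto simp: algebra_simps)
      finally have "lincomb_cols A x' E \<in> K" using K x(3) k0(3) unfolding vsub_def by simp
      then have "x' \<in> XS A K E" using x k0 unfolding XS_def x'_def supp_in_def by auto
      moreover have "x = (\<lambda>i. x' i + d * x0 i)" unfolding x'_def by auto
      ultimately show "x \<in> spanext (XS A K E) x0" unfolding spanext_def by blast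
    next
      fix x assume "x \<in> spanext (XS A K E) x0"
      then obtain x' c where x: "x = (\<lambda>i. x' i + c * x0 i)" "x' \<in> XS A K E" unfolding spanext_def by blast
      have "lincomb_cols A x E = lincomb_cols A x' E + c \<cdot>\<^sub>v lincomb_cols A x0 E" unfolding x lc_lin ..
      also have "\<dots> = (lincomb_cols A x' E + c \<cdot>\<^sub>v k0) + (c * c0) \<cdot>\<^sub>v v"
        using k0 Kc[OF k0(3)] v by (intro eq_vecI) (auto simp: algebra_simps)
      finally have "lincomb_cols A x E \<in> add_span K v"
        using K x(2) k0(3) unfolding add_span_def vsub_def XS_def by blast
      moreover have "supp_in x E" using x k0 unfolding XS_def supp_in_def by auto
      ultimately show "x \<in> XS A (add_span K v) E" unfolding XS_def by blast
    qed
    then show ?thesis using k0 by blast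
  qed
qed

lemma XS_append:
  fixes B :: "'a::field mat"
  assumes u: "u \<in> carrier_vec (dim_col B)" and E: "E \<subseteq> {0..<dim_col B}"
  shows "XS (B @\<^sub>r mat_of_rows (dim_col B) [u]) {0\<^sub>v (dim_row (B @\<^sub>r mat_of_rows (dim_col B) [u]))} E
     = {y \<in> XS B {0\<^sub>v (dim_row B)} E. (\<Sum>i\<in>E. y i * u $ i) = 0}"
proof -
  let ?R = "mat_of_rows (dim_col B) [u]"
  let ?B = "B @\<^sub>r ?R"
  have dr: "dim_row ?B = Suc (dim_row B)" unfolding append_rows_def by simp
  have ent1: "?B $$ (r, i) = B $$ (r, i)" if "r < dim_row B" "i < dim_col B" for r i
    using that unfolding append_rows_def by simp
  have ent2: "?B $$ (dim_row B, i) = u $ i" if "i < dim_col B" for i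
    using that unfolding append_rows_def mat_of_rows_def by simp
  have "lincomb_cols ?B y E = 0\<^sub>v (dim_row ?B) \<longleftrightarrow>
      lincomb_cols B y E = 0\<^sub>v (dim_row B) \<and> (\<Sum>i\<in>E. y i * u $ i) = 0" for y
  proof -
    have "lincomb_cols ?B y E = 0\<^sub>v (dim_row ?B) \<longleftrightarrow> (\<forall>r<Suc (dim_row B). (\<Sum>i\<in>E. y i * ?B $$ (r, i)) = 0)"
      unfolding lincomb_cols_def dr by (auto simp: vec_eq_iff)
    also have "\<dots> \<longleftrightarrow> (\<forall>r<dim_row B. (\<Sum>i\<in>E. y i * ?B $$ (r, i)) = 0) \<and> (\<Sum>i\<in>E. y i * ?B $$ (dim_row B, i)) = 0"
      by (auto simp: less_Suc_eq)
    also have "(\<forall>r<dim_row B. (\<Sum>i\<in>E. y i * ?B $$ (r, i)) = 0) \<longleftrightarrow> (\<forall>r<dim_row B. (\<Sum>i\<in>E. y i * B $$ (r, i)) = 0)"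
    proof -
      have "r < dim_row B \<Longrightarrow> (\<Sum>i\<in>E. y i * ?B $$ (r, i)) = (\<Sum>i\<in>E. y i * B $$ (r, i))" for r
        using E ent1 by (intro sum.cong) auto
      then show ?thesis by auto
    qed
    also have "(\<Sum>i\<in>E. y i * ?B $$ (dim_row B, i)) = (\<Sum>i\<in>E. y i * u $ i)"
      using E ent2 by (intro sum.cong) auto
    also have "(\<forall>r<dim_row B. (\<Sum>i\<in>E. y i * B $$ (r, i)) = 0) \<longleftrightarrow> lincomb_cols B y E = 0\<^sub>v (dim_row B)"
      unfolding lincomb_cols_def by (auto simp: vec_eq_iff)
    finally show ?thesis .
  qed
  then show ?thesis unfolding XS_def by auto
qed



definition Inv :: "'a::field mat \<Rightarrow> 'a mat \<Rightarrow> 'a vec set \<Rightarrow> nat set \<Rightarrow> bool" where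
  "Inv A B K E \<longleftrightarrow> vsub (dim_row A) K \<and> E \<subseteq> {0..<dim_col A} \<and> dim_col B = dim_col A \<and>
     XS B {0\<^sub>v (dim_row B)} E = perp E (XS A K E)"

lemma Inv_bundle:
  assumes I: "Inv A B K E"
  shows "mrank A K E = 0 \<longleftrightarrow> mrank B {0\<^sub>v (dim_row B)} E = card E"
    and "mconnected A K E \<longleftrightarrow> mconnected B {0\<^sub>v (dim_row B)} E"
    and "mcomponent A K E C \<longleftrightarrow> mcomponent B {0\<^sub>v (dim_row B)} E C"
    and "mcomponent A K E C \<Longrightarrow> Inv A B K C"
proof -
  let ?Z = "{0\<^sub>v (dim_row B)}"
  let ?X = "XS A K E"
  have K: "vsub (dim_row A) K" and EE: "E \<subseteq> {0..<dim_col A}" and dc: "dim_col B = dim_col A"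
    and Y: "XS B ?Z E = perp E ?X" using I unfolding Inv_def by auto
  have fin: "finite E" using EE finite_subset by blast
  have Z: "vsub (dim_row B) ?Z" by (rule vsub_zero)
  have LX: "lsub E ?X" by (rule lsub_XS[OF K])
  show "mrank A K E = 0 \<longleftrightarrow> mrank B ?Z E = card E"
    unfolding mrank_lemmas(1)[OF K fin] mrank_lemmas(2)[OF Z fin] Y by (rule T3[OF LX fin])
  show "mconnected A K E \<longleftrightarrow> mconnected B ?Z E"
    unfolding mconnected_XS[OF fin subset_refl] Y by (rule aconn_dual[OF LX fin])
  show "mcomponent A K E C \<longleftrightarrow> mcomponent B ?Z E C"
    unfolding mcomponent_XS[OF fin] Y by (rule acomp_dual[OF LX fin])
  assume "mcomponent A K E C"
  then have c: "acomp ?X E C" unfolding mcomponent_XS[OF fin] .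
  then have CE: "C \<subseteq> E" unfolding acomp_def by blast
  have s: "sep ?X C" by (rule acomp_sep[OF LX fin c])
  have "XS B ?Z C = {y \<in> XS B ?Z E. supp_in y C}" by (rule XS_sub[OF fin CE])
  also have "\<dots> = {y \<in> perp E ?X. supp_in y C}" using Y by simp
  also have "\<dots> = perp C {x \<in> ?X. supp_in x C}" by (rule perp_restrict[OF LX fin s CE, symmetric])
  also have "{x \<in> ?X. supp_in x C} = XS A K C" by (rule XS_sub[OF fin CE, symmetric])
  finally show "Inv A B K C" using K EE CE dc unfolding Inv_def by auto
qed

lemma Inv_step:
  assumes I: "Inv A B K E" and u: "u \<in> carrier_vec (dim_col B)"
    and eq: "XS A K' E = spanext (XS A K E) uf" and K': "vsub (dim_row A) K'"
    and uf: "\<And>i. i \<in> E \<Longrightarrow> uf i = u $ i"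
  shows "Inv A (B @\<^sub>r mat_of_rows (dim_col B) [u]) K' E"
proof -
  let ?B = "B @\<^sub>r mat_of_rows (dim_col B) [u]"
  have K: "vsub (dim_row A) K" and EE: "E \<subseteq> {0..<dim_col A}" and dc: "dim_col B = dim_col A"
    and Y: "XS B {0\<^sub>v (dim_row B)} E = perp E (XS A K E)" using I unfolding Inv_def by auto
  have dc': "dim_col ?B = dim_col A" using dc unfolding append_rows_def by simp
  have "XS ?B {0\<^sub>v (dim_row ?B)} E = {y \<in> XS B {0\<^sub>v (dim_row B)} E. (\<Sum>i\<in>E. y i * u $ i) = 0}"
    by (rule XS_append[OF u]) (use EE dc in auto)
  also have "\<dots> = {y \<in> perp E (XS A K E). dotE E uf y = 0}"
  proof -
    have "(\<Sum>i\<in>E. y i * u $ i) = dotE E uf y" for y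
      unfolding dotE_def using uf by (intro sum.cong) auto
    then show ?thesis using Y by simp
  qed
  also have "\<dots> = perp E (XS A K' E)" unfolding eq
    by (rule perp_spanext[OF lsub_XS[OF K], symmetric])
  finally show ?thesis using K' EE dc' unfolding Inv_def by auto
qed

lemma main1:
  assumes "csd_le A K E d" shows "Inv A B K E \<Longrightarrow> dsd_le B E d"
  using assms
proof (induction arbitrary: B rule: csd_le.induct)
  case (rank0 K E d)
  then show ?case using Inv_bundle(1) dsd_le.indep by blast
next
  case (disc K E d)
  show ?case
  proof (rule dsd_le.disc)
    show "mrank B {0\<^sub>v (dim_row B)} E \<noteq> card E" using disc.hyps(1) Inv_bundle(1)[OF disc.prems] by simp
    show "\<not> mconnected B {0\<^sub>v (dim_row B)} E" using disc Inv_bundle(2) by blast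
    show "\<forall>C. mcomponent B {0\<^sub>v (dim_row B)} E C \<longrightarrow> dsd_le B C d"
    proof (intro allI impI)
      fix C assume "mcomponent B {0\<^sub>v (dim_row B)} E C"
      then have c: "mcomponent A K E C" using Inv_bundle(3)[OF disc.prems] by blast
      then have "Inv A B K C" using Inv_bundle(4)[OF disc.prems] by blast
      then show "dsd_le B C d" using disc.IH c by blast
    qed
  qed
next
  case (conn K E v d)
  have K: "vsub (dim_row A) K" and EE: "E \<subseteq> {0..<dim_col A}" and dc: "dim_col B = dim_col A"
    using conn.prems unfolding Inv_def by auto
  obtain uf where uf: "supp_in uf E" "XS A (add_span K v) E = spanext (XS A K E) uf"
    using XS_add_span[OF K conn.hyps(3)] by blast
  define u where "u = vec (dim_col B) uf"
  have u: "u \<in> carrier_vec (dim_col B)" unfolding u_def by simp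
  have ufu: "uf i = u $ i" if "i \<in> E" for i using that EE dc unfolding u_def by auto
  have "Inv A (B @\<^sub>r mat_of_rows (dim_col B) [u]) (add_span K v) E"
    by (rule Inv_step[OF conn.prems u uf(2) vsub_add_span[OF K conn.hyps(3)] ufu])
  then have "dsd_le (B @\<^sub>r mat_of_rows (dim_col B) [u]) E d" by (rule conn.IH)
  moreover have "mrank B {0\<^sub>v (dim_row B)} E \<noteq> card E" using conn.hyps(1) Inv_bundle(1)[OF conn.prems] by simp
  moreover have "mconnected B {0\<^sub>v (dim_row B)} E" using conn Inv_bundle(2) by blast
  ultimately show ?case using u dsd_le.conn by blast
qed

lemma main2:
  assumes "dsd_le B E d" shows "Inv A B K E \<Longrightarrow> csd_le A K E d"
  using assms
proof (induction arbitrary: K rule: dsd_le.induct)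
  case (indep B E d)
  then show ?case using Inv_bundle(1) csd_le.rank0 by blast
next
  case (disc B E d)
  show ?case
  proof (rule csd_le.disc)
    show "mrank A K E \<noteq> 0" using disc Inv_bundle(1) by blast
    show "\<not> mconnected A K E" using disc Inv_bundle(2) by blast
    show "\<forall>C. mcomponent A K E C \<longrightarrow> csd_le A K C d"
    proof (intro allI impI)
      fix C assume c: "mcomponent A K E C"
      then have c': "mcomponent B {0\<^sub>v (dim_row B)} E C" using Inv_bundle(3)[OF disc.prems] by blast
      have "Inv A B K C" using Inv_bundle(4)[OF disc.prems c] .
      then show "csd_le A K C d" using disc.IH c' by blast
    qed
  qed
next
  case (conn B E u d)
  have K: "vsub (dim_row A) K" and EE: "E \<subseteq> {0..<dim_col A}" and dc: "dim_col B = dim_col A"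
    using conn.prems unfolding Inv_def by auto
  define uf where "uf = restr (\<lambda>i. u $ i) E"
  define v where "v = lincomb_cols A (\<lambda>i. u $ i) E"
  have v: "v \<in> carrier_vec (dim_row A)" unfolding v_def by simp
  have eq: "XS A (add_span K v) E = spanext (XS A K E) uf"
    unfolding v_def uf_def by (rule XS_add_span2[OF K])
  have ufu: "uf i = u $ i" if "i \<in> E" for i using that unfolding uf_def restr_def by auto
  have "Inv A (B @\<^sub>r mat_of_rows (dim_col B) [u]) (add_span K v) E"
    by (rule Inv_step[OF conn.prems conn.hyps(3) eq vsub_add_span[OF K v] ufu])
  then have "csd_le A (add_span K v) E d" by (rule conn.IH)
  moreover have "mrank A K E \<noteq> 0" using conn Inv_bundle(1) by blast
  moreover have "mconnected A K E" using conn Inv_bundle(2) by blast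
  ultimately show ?case using v csd_le.conn by blast
qed



lemma lc_zero_iff:
  "lincomb_cols M y E = 0\<^sub>v (dim_row M) \<longleftrightarrow> (\<forall>r<dim_row M. (\<Sum>j\<in>E. y j * M $$ (r, j)) = 0)"
  unfolding lincomb_cols_def by (auto simp: vec_eq_iff)

lemma row_in_row_space:
  assumes "r < dim_row M"
  shows "vec (dim_col M) (\<lambda>j. M $$ (r, j)) \<in> row_space M"
proof -
  have "(\<Sum>i<dim_row M. (if i = r then 1 else 0) * M $$ (i, j)) = M $$ (r, j)" for j
  proof -
    have "(\<Sum>i<dim_row M. (if i = r then 1 else 0) * M $$ (i, j)) = (\<Sum>i<dim_row M. if i = r then M $$ (i, j) else 0)"
      by (rule sum.cong) auto
    also have "\<dots> = M $$ (r, j)" using assms by (simp add: sum.delta')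
    finally show ?thesis .
  qed
  then have "vec (dim_col M) (\<lambda>j. M $$ (r, j)) =
      vec (dim_col M) (\<lambda>j. \<Sum>i<dim_row M. (\<lambda>i. if i = r then 1 else 0) i * M $$ (i, j))" by simp
  then show ?thesis unfolding row_space_def
    by (intro CollectI exI[of _ "\<lambda>i. if i = r then 1 else 0"]) simp
qed

lemma init_Inv:
  fixes A B :: "'a::field mat"
  assumes dA: "dim_col A = n" and dB: "dim_col B = n"
    and rs: "row_space B = orth_compl n (row_space A)"
  shows "Inv A B {0\<^sub>v (dim_row A)} {0..<n}"
proof -
  let ?E = "{0..<n}"
  let ?XA = "XS A {0\<^sub>v (dim_row A)} ?E"
  have XA: "x \<in> ?XA \<longleftrightarrow> supp_in x ?E \<and> (\<forall>r<dim_row A. (\<Sum>j\<in>?E. x j * A $$ (r, j)) = 0)" for x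
    unfolding XS_def using lc_zero_iff[of A x ?E] by auto
  have XB: "y \<in> XS B {0\<^sub>v (dim_row B)} ?E \<longleftrightarrow> supp_in y ?E \<and> (\<forall>r<dim_row B. (\<Sum>j\<in>?E. y j * B $$ (r, j)) = 0)" for y
    unfolding XS_def using lc_zero_iff[of B y ?E] by auto
  have "XS B {0\<^sub>v (dim_row B)} ?E = perp ?E ?XA"
  proof (rule equalityI; rule subsetI)
    fix y assume "y \<in> XS B {0\<^sub>v (dim_row B)} ?E"
    then have y: "supp_in y ?E" "\<And>r. r < dim_row B \<Longrightarrow> (\<Sum>j\<in>?E. y j * B $$ (r, j)) = 0"
      using XB by auto
    have "dotE ?E x y = 0" if x: "x \<in> ?XA" for x
    proof -
      have x0: "\<And>r. r < dim_row A \<Longrightarrow> (\<Sum>j\<in>?E. x j * A $$ (r, j)) = 0" using x XA by auto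
      define xv where "xv = vec n x"
      have "xv \<in> orth_compl n (row_space A)"
        unfolding orth_compl_def
      proof (intro CollectI conjI ballI)
        show "xv \<in> carrier_vec n" unfolding xv_def by simp
        fix w assume "w \<in> row_space A"
        then obtain c where w: "w = vec (dim_col A) (\<lambda>j. \<Sum>i<dim_row A. c i * A $$ (i, j))"
          unfolding row_space_def by blast
        have "xv \<bullet> w = (\<Sum>j\<in>?E. x j * (\<Sum>i<dim_row A. c i * A $$ (i, j)))"
          unfolding w scalar_prod_def xv_def dA by (intro sum.cong) auto
        also have "\<dots> = (\<Sum>i<dim_row A. c i * (\<Sum>j\<in>?E. x j * A $$ (i, j)))"
          by (simp add: sum_distrib_left algebra_simps sum.swap[of _ ?E])
        also have "\<dots> = 0" using x0 by simp
        finally show "xv \<bullet> w = 0" .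
      qed
      then have "xv \<in> row_space B" using rs by simp
      then obtain c where c: "xv = vec (dim_col B) (\<lambda>j. \<Sum>i<dim_row B. c i * B $$ (i, j))"
        unfolding row_space_def by blast
      have xj: "x j = (\<Sum>i<dim_row B. c i * B $$ (i, j))" if "j < n" for j
      proof -
        have "xv $ j = x j" unfolding xv_def using that by simp
        moreover have "xv $ j = (\<Sum>i<dim_row B. c i * B $$ (i, j))" unfolding c using that dB by simp
        ultimately show ?thesis by simp
      qed
      have "dotE ?E x y = (\<Sum>j\<in>?E. (\<Sum>i<dim_row B. c i * B $$ (i, j)) * y j)"
        unfolding dotE_def using xj by (intro sum.cong) auto
      also have "\<dots> = (\<Sum>i<dim_row B. c i * (\<Sum>j\<in>?E. y j * B $$ (i, j)))"
        by (simp add: sum_distrib_left sum_distrib_right algebra_simps sum.swap[of _ ?E])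
      also have "\<dots> = 0" using y(2) by simp
      finally show ?thesis .
    qed
    then show "y \<in> perp ?E ?XA" using y(1) unfolding perp_def by blast
  next
    fix y assume "y \<in> perp ?E ?XA"
    then have y: "supp_in y ?E" "\<And>x. x \<in> ?XA \<Longrightarrow> dotE ?E x y = 0" unfolding perp_def by auto
    have "(\<Sum>j\<in>?E. y j * B $$ (r, j)) = 0" if r: "r < dim_row B" for r
    proof -
      have "vec (dim_col B) (\<lambda>j. B $$ (r, j)) \<in> row_space B" by (rule row_in_row_space[OF r])
      then have o: "\<forall>w\<in>row_space A. vec n (\<lambda>j. B $$ (r, j)) \<bullet> w = 0"
        using rs dB unfolding orth_compl_def by auto
      define xr where "xr = (\<lambda>j. if j < n then B $$ (r, j) else 0)"
      have "xr \<in> ?XA" unfolding XA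
      proof
        show "supp_in xr ?E" unfolding xr_def supp_in_def by auto
        show "\<forall>i<dim_row A. (\<Sum>j\<in>?E. xr j * A $$ (i, j)) = 0"
        proof (intro allI impI)
          fix i assume i: "i < dim_row A"
          have "vec (dim_col A) (\<lambda>j. A $$ (i, j)) \<in> row_space A" by (rule row_in_row_space[OF i])
          then have "vec n (\<lambda>j. B $$ (r, j)) \<bullet> vec (dim_col A) (\<lambda>j. A $$ (i, j)) = 0" using o by blast
          moreover have "vec n (\<lambda>j. B $$ (r, j)) \<bullet> vec (dim_col A) (\<lambda>j. A $$ (i, j)) =
              (\<Sum>j\<in>?E. xr j * A $$ (i, j))"
            unfolding scalar_prod_def xr_def dA by (intro sum.cong) auto
          ultimately show "(\<Sum>j\<in>?E. xr j * A $$ (i, j)) = 0" by simp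
        qed
      qed
      then have "dotE ?E xr y = 0" by (rule y(2))
      moreover have "dotE ?E xr y = (\<Sum>j\<in>?E. y j * B $$ (r, j))"
        unfolding dotE_def xr_def by (intro sum.cong) (auto simp: mult.commute)
      ultimately show ?thesis by simp
    qed
    then show "y \<in> XS B {0\<^sub>v (dim_row B)} ?E" using XB y(1) by blast
  qed
  then show ?thesis unfolding Inv_def using vsub_zero dA dB by auto
qed

theorem theorem2:
  fixes A B :: "'a::field mat" and n :: nat
  assumes "dim_col A = n" and "dim_col B = n"
    and "row_space B = orth_compl n (row_space A)"
  shows "csd A = dsd B"
proof -
  have I: "Inv A B {0\<^sub>v (dim_row A)} {0..<n}" by (rule init_Inv[OF assms])
  have "csd_le A {0\<^sub>v (dim_row A)} {0..<dim_col A} d \<longleftrightarrow> dsd_le B {0..<dim_col B} d" for d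
    using main1[of A _ _ d B] main2[of B _ d A] I assms(1,2) by auto
  then have "csd_le A {0\<^sub>v (dim_row A)} {0..<dim_col A} = dsd_le B {0..<dim_col B}" by (rule ext)
  then show ?thesis unfolding csd_def dsd_def by simp
qed

end
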